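(* Fix integers $q\ge 1$ and $k\ge 3$, and let $G(q,k)$ be the graph on vertex set $\{v_0,v_1,\ldots,v_{kq}\}$ in which, with all indices taken modulo $kq+1$, the neighbourhood of $v_i$ is $$\{v_{i-1},v_{i+1}\}\cup\{v_{i+kj+m} : m=2,3,\ldots,k-1,\ j=0,1,\ldots,q-1\}.$$ Then $G(q,k)$ is $(k+1)$-vertex-critical.
   Context: $\chi(G)$ denotes the chromatic number of $G$. A graph $G$ is $t$-vertex-critical if $\chi(G)=t$ and $\chi(G-v)<t$ for every vertex $v$ of $G$. *)

theory Defs
  imports Main
begin

text \<open>A (simple) graph is given by a vertex set V and an adjacency predicate E
  (only its restriction to V matters).\<close>

definition colorable :: "'a set \<Rightarrow> ('a \<Rightarrow> 'a \<Rightarrow> bool) \<Rightarrow> nat \<Rightarrow> bool" where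
  "colorable V E c \<longleftrightarrow>
     (\<exists>f::'a \<Rightarrow> nat. (\<forall>v\<in>V. f v < c) \<and> (\<forall>u\<in>V. \<forall>v\<in>V. E u v \<longrightarrow> f u \<noteq> f v))"

definition chromatic_number :: "'a set \<Rightarrow> ('a \<Rightarrow> 'a \<Rightarrow> bool) \<Rightarrow> nat" where
  "chromatic_number V E = (LEAST c. colorable V E c)"

definition vertex_critical :: "'a set \<Rightarrow> ('a \<Rightarrow> 'a \<Rightarrow> bool) \<Rightarrow> nat \<Rightarrow> bool" where
  "vertex_critical V E t \<longleftrightarrow>
     chromatic_number V E = t \<and> (\<forall>v\<in>V. chromatic_number (V - {v}) E < t)"

text \<open>The graph G(q,k): vertex v_i is represented by i \<in> {0..k*q}; indices mod k*q+1.
  v_j is adjacent to v_i iff j = i \<plusminus> 1 or j = i + k*jj + m (mod kq+1) with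
  2 \<le> m \<le> k-1 and jj < q.\<close>
definition Gqk_adj :: "nat \<Rightarrow> nat \<Rightarrow> nat \<Rightarrow> nat \<Rightarrow> bool" where
  "Gqk_adj q k i j \<longleftrightarrow>
     (let n = k * q + 1 in
        j = (i + 1) mod n \<or> i = (j + 1) mod n \<or>
        (\<exists>m\<in>{2..k-1}. \<exists>jj<q. j = (i + k * jj + m) mod n))"

end

theory Submission
  imports Defs
begin


lemma div_aux: "3 \<le> (k::nat) \<Longrightarrow> (k*m+1) div k = m"
  by (metis add.right_neutral antisym_conv2 div_if div_mult_self4 less_one
    linorder_not_less not_numeral_le_zero one_less_numeral_iff
    semiring_norm(77))

lemma adj_dist:
  assumes q: "q \<ge> 1" and k: "k \<ge> 3" and uv: "u < v" "v \<le> k*q"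
  and na: "\<not> Gqk_adj q k u v" "\<not> Gqk_adj q k v u"
  shows "v - u \<ge> k \<and> u + (k*q+1) - v \<ge> k"
proof (rule ccontr)
  assume "\<not> ?thesis"
  then consider "v - u < k" | "u + (k*q+1) - v < k" by linarith
  then show False
  proof cases
    case 1
    show False
    proof (cases "v - u = 1")
      case True
      then have "v = (u+1) mod (k*q+1)" using uv by simp
      then show False using na(1) unfolding Gqk_adj_def Let_def by blast
    next
      case False
      then have "v - u \<in> {2..k-1}" using 1 uv by auto
      moreover have "v = (u + k*0 + (v-u)) mod (k*q+1)" using uv by simp
      ultimately have "\<exists>m\<in>{2..k-1}. \<exists>jj<q. v = (u + k*jj + m) mod (k*q+1)" using q
        by (intro bexI[of _ "v-u"] exI[of _ 0]) auto
      then show False using na(1) unfolding Gqk_adj_def Let_def by blast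
    qed
  next
    case 2
    show False
    proof (cases "u + (k*q+1) - v = 1")
      case True
      then have "u = 0" "v = k*q" using uv by linarith+
      then have "u = (v+1) mod (k*q+1)" by simp
      then show False using na(1) unfolding Gqk_adj_def Let_def by blast
    next
      case False
      then have "u + (k*q+1) - v \<in> {2..k-1}" using 2 uv by auto
      moreover have "u = (v + k*0 + (u + (k*q+1) - v)) mod (k*q+1)" using uv 2 k
      proof -
        have "v + (u + (k*q+1) - v) = u + (k*q+1)" using uv by simp
        moreover have "u < k*q+1" using uv by simp
        then have "(u + (k*q+1)) mod (k*q+1) = u" by (simp only: mod_add_self2 mod_less)
        ultimately show ?thesis by simp
      qed
      ultimately have "\<exists>m\<in>{2..k-1}. \<exists>jj<q. u = (v + k*jj + m) mod (k*q+1)" using q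
        by (intro bexI[of _ "u + (k*q+1) - v"] exI[of _ 0]) auto
      then show False using na(2) unfolding Gqk_adj_def Let_def by blast
    qed
  qed
qed

lemma class_card:
  assumes q: "q \<ge> 1" and k: "k \<ge> 3" and S: "S \<subseteq> {0..k*q}"
  and ind: "\<And>u v. u \<in> S \<Longrightarrow> v \<in> S \<Longrightarrow> u < v \<Longrightarrow> \<not> Gqk_adj q k u v \<and> \<not> Gqk_adj q k v u"
  shows "card S \<le> q"
proof (cases "S = {}")
  case True then show ?thesis by simp
next
  case False
  have fin: "finite S" using S finite_subset by blast
  define a where "a = Min S"
  define b where "b = Max S"
  have aS: "a \<in> S" and bS: "b \<in> S" using fin False a_def b_def by auto
  have ab: "\<And>x. x \<in> S \<Longrightarrow> a \<le> x \<and> x \<le> b" using fin a_def b_def by auto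
  have dist: "\<And>x y. x \<in> S \<Longrightarrow> y \<in> S \<Longrightarrow> x < y \<Longrightarrow> y - x \<ge> k \<and> x + (k*q+1) - y \<ge> k"
    using adj_dist[OF q k] ind S by (meson atLeastAtMost_iff subsetD)
  have bnd: "b - a \<le> k*(q-1)+1"
  proof (cases "a < b")
    case True
    then have "a + (k*q+1) - b \<ge> k" using dist aS bS by blast
    moreover have "k*q = k*(q-1) + k" using q by (metis add.commute mult.commute mult_Suc Suc_diff_1 less_le_trans zero_less_one)
    moreover have "b \<le> k*q" using bS S by auto
    ultimately show ?thesis using True by linarith
  next
    case False then show ?thesis using ab aS bS by force
  qed
  define g where "g x = (x - a) div k" for x
  have inj: "inj_on g S"
  proof (rule inj_onI)
    fix x y assume xy: "x \<in> S" "y \<in> S" "g x = g y"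
    show "x = y"
    proof (rule ccontr)
      assume "x \<noteq> y"
      then consider "x < y" | "y < x" by linarith
      then show False
      proof cases
        case 1
        then have "y - a \<ge> (x - a) + k" using dist xy ab by fastforce
        then have "(y - a) div k \<ge> ((x-a) + k) div k" using div_le_mono by blast
        moreover have "((x-a) + k) div k = (x-a) div k + 1" using k by (subst div_add_self2) auto
        ultimately show False using xy(3) unfolding g_def by simp
      next
        case 2
        then have "x - a \<ge> (y - a) + k" using dist xy ab by fastforce
        then have "(x - a) div k \<ge> ((y-a) + k) div k" using div_le_mono by blast
        moreover have "((y-a) + k) div k = (y-a) div k + 1" using k by (subst div_add_self2) auto
        ultimately show False using xy(3) unfolding g_def by simp
      qed
    qed
  qed
  have img: "g ` S \<subseteq> {..<q}"
  proof
    fix y assume "y \<in> g ` S"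
    then obtain x where x: "x \<in> S" "y = g x" by blast
    have "x - a \<le> k*(q-1)+1" using ab[OF x(1)] bnd by linarith
    then have "(x - a) div k \<le> (k*(q-1)+1) div k" using div_le_mono by blast
    also have "(k*(q-1)+1) div k = q - 1" using k by (rule div_aux)
    finally show "y \<in> {..<q}" using x q unfolding g_def by auto
  qed
  have "card S = card (g ` S)" using inj by (simp add: card_image)
  also have "\<dots> \<le> card {..<q}" using img by (intro card_mono) auto
  finally show ?thesis by simp
qed

lemma not_col:
  assumes q: "q \<ge> 1" and k: "k \<ge> 3" and c: "colorable {0..k*q} (Gqk_adj q k) c"
  shows "k < c"
proof (rule ccontr)
  assume "\<not> k < c"
  then have ck: "c \<le> k" by simp
  obtain f where f: "\<forall>v\<in>{0..k*q}. f v < c" "\<forall>u\<in>{0..k*q}. \<forall>v\<in>{0..k*q}. Gqk_adj q k u v \<longrightarrow> f u \<noteq> f v"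
    using c unfolding colorable_def by blast
  define S where "S a = {x\<in>{0..k*q}. f x = a}" for a
  have cov: "{0..k*q} = (\<Union>a<c. S a)" using f(1) unfolding S_def by auto
  have cs: "card (S a) \<le> q" for a
  proof (rule class_card[OF q k])
    show "S a \<subseteq> {0..k*q}" by (auto simp: S_def)
    fix u v assume "u \<in> S a" "v \<in> S a" "u < v"
    then have "u \<in> {0..k*q}" "v \<in> {0..k*q}" "f u = f v" by (auto simp: S_def)
    then show "\<not> Gqk_adj q k u v \<and> \<not> Gqk_adj q k v u" using f(2) by metis
  qed
  have "k*q + 1 = card {0..k*q}" by simp
  also have "\<dots> \<le> (\<Sum>a<c. card (S a))" unfolding cov by (rule card_UN_le) simp
  also have "\<dots> \<le> (\<Sum>a<c. q)" by (rule sum_mono) (rule cs)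
  also have "\<dots> = c*q" by simp
  also have "\<dots> \<le> k*q" using ck by simp
  finally show False by simp
qed

lemma adj_off:
  assumes k: "k \<ge> 3" and ij: "i \<le> k*q" "j \<le> k*q" and a: "Gqk_adj q k i j"
  shows "\<exists>e. (e = 1 \<or> e = k*q \<or> (\<exists>m jj. 2 \<le> m \<and> m \<le> k-1 \<and> jj < q \<and> e = k*jj+m)) \<and> j = (i+e) mod (k*q+1)"
proof -
  consider "j = (i + 1) mod (k*q+1)" | "i = (j + 1) mod (k*q+1)"
    | "\<exists>m\<in>{2..k-1}. \<exists>jj<q. j = (i + k * jj + m) mod (k*q+1)"
    using a unfolding Gqk_adj_def Let_def by blast
  then show ?thesis
  proof cases
    case 1 then show ?thesis by blast
  next
    case 2
    have "j = (i + k*q) mod (k*q+1)"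
    proof (cases "j = k*q")
      case True
      then have "i = 0" using 2 by simp
      then show ?thesis using True by simp
    next
      case False
      then have "i = j + 1" using 2 ij by simp
      then have "i + k*q = j + (k*q+1)" by simp
      moreover have "j < k*q+1" using ij by simp
      then have "(j + (k*q+1)) mod (k*q+1) = j" by (simp only: mod_add_self2 mod_less)
      ultimately show ?thesis by simp
    qed
    then show ?thesis by blast
  next
    case 3
    then obtain m jj where "m \<in> {2..k-1}" "jj < q" "j = (i + k * jj + m) mod (k*q+1)" by blast
    then show ?thesis by (intro exI[of _ "k*jj+m"]) (auto simp: add.assoc)
  qed
qed

lemma between: "(k::int) > 0 \<Longrightarrow> k*a < k*t \<Longrightarrow> k*t < k*a + k \<Longrightarrow> False"
proof -
  assume h: "k > 0" "k*a < k*t" "k*t < k*a + k"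
  then have "a < t" using mult_less_cancel_left_pos by blast
  moreover have "k*t < k*(a+1)" using h by (simp add: algebra_simps)
  then have "t < a + 1" using h(1) mult_less_cancel_left_pos by blast
  ultimately show False by linarith
qed

definition pos :: "nat \<Rightarrow> nat \<Rightarrow> nat \<Rightarrow> nat \<Rightarrow> nat" where
  "pos q k w x = (if w < x then x - w - 1 else x + k*q - w)"

lemma mod_expl: "a < 2*n \<Longrightarrow> (a::nat) mod n = (if a < n then a else a - n)"
  by (simp add: le_mod_geq)

lemma col_ok:
  assumes q: "q \<ge> 1" and k: "k \<ge> 3" and w: "w \<le> k*q"
    and uv: "u \<le> k*q" "v \<le> k*q" "u \<noteq> w" "v \<noteq> w" and a: "Gqk_adj q k u v"
  shows "pos q k w u mod k \<noteq> pos q k w v mod k"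
proof
  assume eq: "pos q k w u mod k = pos q k w v mod k"
  obtain e where e: "e = 1 \<or> e = k*q \<or> (\<exists>m jj. 2 \<le> m \<and> m \<le> k-1 \<and> jj < q \<and> e = k*jj+m)"
    and ve: "v = (u+e) mod (k*q+1)" using adj_off[OF k uv(1,2) a] by blast
  have e1: "1 \<le> e" "e \<le> k*q"
  proof -
    have "k*jj + m \<le> k*q" if "m \<le> k-1" "jj < q" for m jj
    proof -
      have "jj + 1 \<le> q" using that by simp
      then have "k*(jj+1) \<le> k*q" by (rule mult_le_mono2)
      then show ?thesis using that k by (simp add: algebra_simps)
    qed
    then show "1 \<le> e" "e \<le> k*q" using e q k by auto
  qed
  have "u + e < 2*(k*q+1)" using uv e1 by simp
  then have ve2: "v = (if u + e < k*q+1 then u + e else u + e - (k*q+1))"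
    using ve mod_expl by presburger
  define D where "D = int (pos q k w v) - int (pos q k w u)"
  have Dk: "int k dvd D" using eq unfolding D_def
    by (metis mod_eq_dvd_iff of_nat_mod)
  then obtain t where t: "D = int k * t" by (auto simp: dvd_def)
  have pb: "pos q k w x < k*q" if "x \<le> k*q" "x \<noteq> w" for x
    using that w unfolding pos_def by auto
  have Dr: "- int (k*q) < D" "D < int (k*q)"
    using pb[OF uv(1,3)] pb[OF uv(2,4)] unfolding D_def by linarith+
  have De: "D = int e \<or> D = int e - int (k*q+1)"
    using ve2 uv w e1 Dr unfolding D_def pos_def by (auto split: if_splits)
  have kp: "int k > 0" using k by simp
  from e consider "e = 1" | "e = k*q" | "\<exists>m jj. 2 \<le> m \<and> m \<le> k-1 \<and> jj < q \<and> e = k*jj+m" by blast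
  then show False
  proof cases
    case 1
    then consider "int k * t = 1" | "int k * t = - int (k*q)" using De t by auto
    then show False
    proof cases
      case 1 then show False using between[OF kp, of 0 t] k by simp
    next
      case 2 then show False using Dr t by simp
    qed
  next
    case 2
    then consider "int k * t = int (k*q)" | "int k * t = -1" using De t by auto
    then show False
    proof cases
      case 1 then show False using Dr t by linarith
    next
      case 2 then show False using between[OF kp, of "-1" t] k by simp
    qed
  next
    case 3
    then obtain m jj where mj: "2 \<le> m" "m \<le> k-1" "jj < q" "e = k*jj+m" by blast
    then consider "int k * t = int k * int jj + int m" | "int k * t = int k * int jj + int m - int k * int q - 1"
      using De t by auto
    then show False
    proof cases
      case 1
      have "m < k" using mj k by linarith
      then show False using 1 between[OF kp, of "int jj" t] mj k by simp
    next
      case 2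
      have "m < k" "int m \<ge> 2" using mj k by linarith+
      moreover have "int k * (int jj - int q) = int k * int jj - int k * int q"
        by (simp add: right_diff_distrib)
      ultimately have "int k * (int jj - int q) < int k * t" "int k * t < int k * (int jj - int q) + int k"
        using 2 by linarith+
      then show False using between[OF kp] by blast
    qed
  qed
qed


lemma col_minus:
  assumes q: "q \<ge> 1" and k: "k \<ge> 3" and w: "w \<le> k*q"
  shows "colorable ({0..k*q} - {w}) (Gqk_adj q k) k"
  unfolding colorable_def
proof (intro exI[of _ "\<lambda>x. pos q k w x mod k"] conjI ballI impI)
  fix v assume "v \<in> {0..k*q} - {w}" then show "pos q k w v mod k < k" using k by simp
next
  fix u v assume "u \<in> {0..k*q} - {w}" "v \<in> {0..k*q} - {w}" "Gqk_adj q k u v"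
  then show "pos q k w u mod k \<noteq> pos q k w v mod k" using col_ok[OF q k w] by auto
qed

lemma col_full:
  assumes q: "q \<ge> 1" and k: "k \<ge> 3"
  shows "colorable {0..k*q} (Gqk_adj q k) (k+1)"
  unfolding colorable_def
proof (intro exI[of _ "\<lambda>x. if x = 0 then k else pos q k 0 x mod k"] conjI ballI impI)
  fix v assume "v \<in> {0..k*q}" have "pos q k 0 v mod k < k" using k by simp
  then show "(if v = 0 then k else pos q k 0 v mod k) < k+1" by simp
next
  fix u v assume uv: "u \<in> {0..k*q}" "v \<in> {0..k*q}" "Gqk_adj q k u v"
  have nl: "u \<noteq> v"
    proof
      assume "u = v"
      then have "v = (v + 1) mod (k*q+1) \<or> (\<exists>m\<in>{2..k-1}. \<exists>jj<q. v = (v + k * jj + m) mod (k*q+1))"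
        using uv(3) unfolding Gqk_adj_def Let_def by auto
      then show False
      proof
        assume "v = (v + 1) mod (k*q+1)"
        moreover have "v + 1 < 2*(k*q+1)" using uv(2) by simp
        then have "(v + 1) mod (k*q+1) = (if v + 1 < k*q+1 then v + 1 else v + 1 - (k*q+1))"
          using mod_expl by blast
        moreover have "k*q \<noteq> 0" using k q by simp
        ultimately show False using uv(2) by (auto split: if_splits)
      next
        assume "\<exists>m\<in>{2..k-1}. \<exists>jj<q. v = (v + k * jj + m) mod (k*q+1)"
        then obtain m jj where mj: "m \<in> {2..k-1}" "jj < q" "v = (v + k * jj + m) mod (k*q+1)" by blast
        have "k*(jj+1) \<le> k*q" using mj(2) by (intro mult_le_mono2) simp
        moreover have "k*(jj+1) = k*jj + k" by simp
        moreover have "m \<le> k - 1" using mj(1) by simp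
        ultimately have "k*jj + m < k*q + 1" using k by linarith
        have "v + k*jj + m < 2*(k*q+1)" using uv(2) \<open>k*jj + m < k*q + 1\<close> by simp
        then have "(v + k * jj + m) mod (k*q+1) = (if v + k*jj + m < k*q+1 then v + k*jj + m else v + k*jj + m - (k*q+1))"
          using mod_expl by blast
        then show False using mj uv(2) \<open>k*jj + m < k*q + 1\<close> by (auto split: if_splits)
      qed
    qed
  show "(if u = 0 then k else pos q k 0 u mod k) \<noteq> (if v = 0 then k else pos q k 0 v mod k)"
  proof (cases "u = 0 \<or> v = 0")
    case True
    have "pos q k 0 x mod k < k" for x using k by simp
    then show ?thesis using nl True by (metis less_irrefl)
  next
    case False then show ?thesis using col_ok[of q k 0 u v] q k uv by auto
  qed
qed

theorem lemma2p6:
  fixes q k :: nat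
  assumes "q \<ge> 1" and "k \<ge> 3"
  shows "vertex_critical {0..k*q} (Gqk_adj q k) (k + 1)"
  unfolding vertex_critical_def
proof
  show "chromatic_number {0..k * q} (Gqk_adj q k) = k + 1"
    unfolding chromatic_number_def
  proof (rule Least_equality)
    show "colorable {0..k * q} (Gqk_adj q k) (k + 1)" by (rule col_full[OF assms])
    fix c assume "colorable {0..k * q} (Gqk_adj q k) c"
    then show "k + 1 \<le> c" using not_col[OF assms] by fastforce
  qed
  show "\<forall>v\<in>{0..k * q}. chromatic_number ({0..k * q} - {v}) (Gqk_adj q k) < k + 1"
  proof
    fix v assume "v \<in> {0..k*q}"
    then have "colorable ({0..k * q} - {v}) (Gqk_adj q k) k" using col_minus[OF assms] by simp
    then have "chromatic_number ({0..k * q} - {v}) (Gqk_adj q k) \<le> k"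
      unfolding chromatic_number_def by (rule Least_le)
    then show "chromatic_number ({0..k * q} - {v}) (Gqk_adj q k) < k + 1" by simp
  qed
qed

end
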